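(* Suppose that, after a permutation of its columns, $A=[A^{(1)},\dots,A^{(k)}]$ where $\mathrm{New}(A^{(1)}),\dots,\mathrm{New}(A^{(k)})$ are mutually disjoint faces of $\mathrm{New}(A)$, such that (1) whenever the extreme points of $\mathrm{New}(A^{(i)})$ are affinely independent, at most two columns of $A^{(i)}$ are non-extreme points of $\mathrm{New}(A^{(i)})$, and (2) for every other $i$, at most one column of $A^{(i)}$ is a non-extreme point of $\mathrm{New}(A^{(i)})$. Then $C_{\mathrm{SAGE}}(A)=C_{\mathrm{NNS}}(A)$.
   Context: Let $A\in\mathbb{R}^{n\times m}$ have distinct columns $a_1,\dots,a_m$. For $c\in\mathbb{R}^m$, $\mathrm{Sig}(A,c)$ denotes the function $x\mapsto\sum_{i=1}^m c_i\exp(a_i^\top x)$ on $\mathbb{R}^n$. $\mathrm{New}(A)=\mathrm{conv}\{a_1,\dots,a_m\}$ is the Newton polytope. $C_{\mathrm{NNS}}(A)=\{c\in\mathbb{R}^m:\mathrm{Sig}(A,c)(x)\ge 0\ \forall x\in\mathbb{R}^n\}$. For $k\in[m]$, the $k$-th AGE cone is $C_{\mathrm{AGE}}(A,k)=\{c\in C_{\mathrm{NNS}}(A): c_i\ge 0\ \forall i\ne k\}$, and the SAGE cone is the Minkowski sum $C_{\mathrm{SAGE}}(A)=\sum_{k=1}^m C_{\mathrm{AGE}}(A,k)$. *)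

theory Defs
  imports "HOL-Analysis.Analysis" "HOL-Library.Disjoint_Sets"
begin

text \<open>Columns of A are a :: 'm \<Rightarrow> real^'n (index type 'm finite, m = CARD('m));
  coefficient vectors c :: 'm \<Rightarrow> real.\<close>

definition Sig :: "('m \<Rightarrow> real^'n) \<Rightarrow> ('m::finite \<Rightarrow> real) \<Rightarrow> real^'n \<Rightarrow> real" where
  "Sig a c x = (\<Sum>i\<in>UNIV. c i * exp (a i \<bullet> x))"

definition New :: "('m \<Rightarrow> real^'n) \<Rightarrow> 'm set \<Rightarrow> (real^'n) set" where
  "New a B = convex hull (a ` B)"

definition C_NNS :: "('m::finite \<Rightarrow> real^'n) \<Rightarrow> ('m \<Rightarrow> real) set" where
  "C_NNS a = {c. \<forall>x. Sig a c x \<ge> 0}"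

definition C_AGE :: "('m::finite \<Rightarrow> real^'n) \<Rightarrow> 'm \<Rightarrow> ('m \<Rightarrow> real) set" where
  "C_AGE a k = {c. c \<in> C_NNS a \<and> (\<forall>i. i \<noteq> k \<longrightarrow> c i \<ge> 0)}"

definition C_SAGE :: "('m::finite \<Rightarrow> real^'n) \<Rightarrow> ('m \<Rightarrow> real) set" where
  "C_SAGE a = {c. \<exists>cs :: 'm \<Rightarrow> 'm \<Rightarrow> real.
      (\<forall>k. cs k \<in> C_AGE a k) \<and> c = (\<lambda>i. \<Sum>k\<in>UNIV. cs k i)}"

definition nonextreme_cols :: "('m \<Rightarrow> real^'n) \<Rightarrow> 'm set \<Rightarrow> 'm set" where
  "nonextreme_cols a B = {j\<in>B. \<not> (a j extreme_point_of New a B)}"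

end

theory Submission
  imports Defs
begin

lemma Sig_add: "Sig a (\<lambda>i. c i + d i) x = Sig a c x + Sig a d x"
  by (simp add: Sig_def distrib_right sum.distrib)

lemma Sig_zero: "Sig a (\<lambda>i. 0) x = 0"
  by (simp add: Sig_def)

lemma NNS_add: "c \<in> C_NNS a \<Longrightarrow> d \<in> C_NNS a \<Longrightarrow> (\<lambda>i. c i + d i) \<in> C_NNS a"
  by (simp add: C_NNS_def Sig_add add_nonneg_nonneg)

lemma AGE_add: "c \<in> C_AGE a k \<Longrightarrow> d \<in> C_AGE a k \<Longrightarrow> (\<lambda>i. c i + d i) \<in> C_AGE a k"
  by (simp add: C_AGE_def NNS_add)

lemma AGE_zero: "(\<lambda>i. 0) \<in> C_AGE a k"
  by (simp add: C_AGE_def C_NNS_def Sig_zero)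

lemma SAGE_sub_NNS: "C_SAGE a \<subseteq> C_NNS a"
proof
  fix c assume "c \<in> C_SAGE a"
  then obtain cs where cs: "\<And>k. cs k \<in> C_AGE a k" and c: "c = (\<lambda>i. \<Sum>k\<in>UNIV. cs k i)"
    unfolding C_SAGE_def by blast
  have "Sig a c x = (\<Sum>k\<in>UNIV. Sig a (cs k) x)" for x
    unfolding c Sig_def sum_distrib_right by (rule sum.swap)
  moreover have "Sig a (cs k) x \<ge> 0" for k x using cs[of k] by (simp add: C_AGE_def C_NNS_def)
  ultimately show "c \<in> C_NNS a" by (simp add: C_NNS_def sum_nonneg)
qed

lemma SAGE_add: "c \<in> C_SAGE a \<Longrightarrow> d \<in> C_SAGE a \<Longrightarrow> (\<lambda>i. c i + d i) \<in> C_SAGE a"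
proof -
  assume "c \<in> C_SAGE a" "d \<in> C_SAGE a"
  then obtain cs ds where cs: "\<And>k. cs k \<in> C_AGE a k" "c = (\<lambda>i. \<Sum>k\<in>UNIV. cs k i)"
    and ds: "\<And>k. ds k \<in> C_AGE a k" "d = (\<lambda>i. \<Sum>k\<in>UNIV. ds k i)"
    unfolding C_SAGE_def by blast
  show ?thesis unfolding C_SAGE_def
    apply (rule CollectI, rule exI[of _ "\<lambda>k i. cs k i + ds k i"])
    using cs ds by (auto simp: AGE_add sum.distrib)
qed

lemma SAGE_zero: "(\<lambda>i. 0) \<in> C_SAGE a"
  unfolding C_SAGE_def by (rule CollectI, rule exI[of _ "\<lambda>k i. 0"]) (simp add: AGE_zero)

lemma AGE_SAGE: "c \<in> C_AGE a k \<Longrightarrow> c \<in> C_SAGE a"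
  unfolding C_SAGE_def
proof (rule CollectI, rule exI[of _ "\<lambda>k' . if k' = k then c else (\<lambda>i. 0)"], intro conjI allI)
  fix k' assume "c \<in> C_AGE a k"
  then show "(if k' = k then c else (\<lambda>i. 0)) \<in> C_AGE a k'" by (simp add: AGE_zero)
next
  show "c = (\<lambda>i. \<Sum>k'\<in>UNIV. (if k' = k then c else (\<lambda>i. 0)) i)"
  proof (rule ext)
    fix i
    have "(\<Sum>k'\<in>UNIV. (if k' = k then c else (\<lambda>i. 0)) i) = (\<Sum>k'\<in>UNIV. if k' = k then c i else 0)"
      by (rule sum.cong) auto
    then show "c i = (\<Sum>k'\<in>UNIV. (if k' = k then c else (\<lambda>i. 0)) i)" by simp
  qed
qed

lemma SAGE_sum: "finite S \<Longrightarrow> (\<And>s. s \<in> S \<Longrightarrow> f s \<in> C_SAGE a) \<Longrightarrow> (\<lambda>i. \<Sum>s\<in>S. f s i) \<in> C_SAGE a"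
proof (induction S rule: finite_induct)
  case empty then show ?case using SAGE_zero by simp
next
  case (insert x F)
  then show ?case using SAGE_add[of "f x" a "\<lambda>i. \<Sum>s\<in>F. f s i"] by simp
qed

lemma exp_neg_lim: "(d::real) < 0 \<Longrightarrow> ((\<lambda>t. exp (t * d)) \<longlongrightarrow> 0) at_top"
proof -
  assume d: "d < 0"
  have "filterlim (\<lambda>t::real. d * t) at_bot at_top"
    by (rule filterlim_tendsto_neg_mult_at_bot[OF tendsto_const d filterlim_ident])
  then have "filterlim (\<lambda>t::real. t * d) at_bot at_top" by (simp add: mult.commute)
  from filterlim_compose[OF exp_at_bot this] show ?thesis .
qed

lemma face_restrict:
  fixes a :: "'m::finite \<Rightarrow> real^'n"
  assumes c: "c \<in> C_NNS a" and F: "F face_of New a UNIV"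
  shows "(\<lambda>i. if a i \<in> F then c i else 0) \<in> C_NNS a"
proof -
  have "polytope (New a UNIV)" unfolding New_def polytope_def by (intro exI[of _ "range a"]) auto
  then have "F exposed_face_of New a UNIV"
    using F exposed_face_of_polyhedron polytope_imp_polyhedron by blast
  then obtain w h where wh: "New a UNIV \<subseteq> {x. w \<bullet> x \<le> h}" "F = New a UNIV \<inter> {x. w \<bullet> x = h}"
    unfolding exposed_face_of_def by blast
  have inN: "a i \<in> New a UNIV" for i unfolding New_def by (simp add: hull_inc)
  have le: "a i \<bullet> w \<le> h" for i using wh(1) inN[of i] by (auto simp: inner_commute)
  have inF: "a i \<in> F \<longleftrightarrow> a i \<bullet> w = h" for i using wh(2) inN[of i] by (auto simp: inner_commute)
  show ?thesis unfolding C_NNS_def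
  proof (rule CollectI, rule allI)
    fix x
    define g where "g t = Sig a c (x + t *\<^sub>R w) * exp (- (t * h))" for t
    have g: "g t = (\<Sum>i\<in>UNIV. c i * exp (a i \<bullet> x) * exp (t * (a i \<bullet> w - h)))" for t
      unfolding g_def Sig_def sum_distrib_right
    proof (rule sum.cong[OF refl])
      fix i
      have "a i \<bullet> (x + t *\<^sub>R w) + - (t * h) = a i \<bullet> x + t * (a i \<bullet> w - h)"
        by (simp add: inner_add_right algebra_simps)
      then show "c i * exp (a i \<bullet> (x + t *\<^sub>R w)) * exp (- (t * h)) = c i * exp (a i \<bullet> x) * exp (t * (a i \<bullet> w - h))"
        by (simp add: mult.assoc exp_add[symmetric])
    qed
    have lim: "(g \<longlongrightarrow> Sig a (\<lambda>i. if a i \<in> F then c i else 0) x) at_top"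
      unfolding g Sig_def
    proof (rule tendsto_sum)
      fix i
      show "((\<lambda>t. c i * exp (a i \<bullet> x) * exp (t * (a i \<bullet> w - h))) \<longlongrightarrow>
              (if a i \<in> F then c i else 0) * exp (a i \<bullet> x)) at_top"
      proof (cases "a i \<in> F")
        case True
        then show ?thesis using inF by simp
      next
        case False
        then have "a i \<bullet> w - h < 0" using inF le[of i] by fastforce
        from tendsto_mult[OF tendsto_const exp_neg_lim[OF this], of "c i * exp (a i \<bullet> x)"]
        show ?thesis using False by simp
      qed
    qed
    have "\<forall>\<^sub>F t in at_top. 0 \<le> g t"
      using c unfolding C_NNS_def g_def by auto
    from tendsto_lowerbound[OF lim this] show "0 \<le> Sig a (\<lambda>i. if a i \<in> F then c i else 0) x" by simp
  qed
qed

lemma extreme_nonneg: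
  fixes a :: "'m::finite \<Rightarrow> real^'n"
  assumes inj: "inj a" and c: "c \<in> C_NNS a" and ex: "a j extreme_point_of New a UNIV"
  shows "c j \<ge> 0"
proof -
  have "{a j} face_of New a UNIV" using ex face_of_singleton by blast
  from face_restrict[OF c this] have "Sig a (\<lambda>i. if a i \<in> {a j} then c i else 0) 0 \<ge> 0"
    unfolding C_NNS_def by blast
  moreover have "(\<lambda>i. if a i \<in> {a j} then c i else 0) = (\<lambda>i. if i = j then c i else 0)"
    using inj by (auto simp: inj_eq)
  ultimately have "Sig a (\<lambda>i. if i = j then c i else 0) 0 \<ge> 0" by simp
  moreover have "Sig a (\<lambda>i. if i = j then c i else 0) 0 = (\<Sum>i\<in>UNIV. if i = j then c j else 0)"
    unfolding Sig_def by (rule sum.cong) auto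
  ultimately show ?thesis by simp
qed

lemma linear_functional_inner:
  fixes L :: "real^'n \<Rightarrow> real"
  assumes "linear L"
  shows "\<exists>w. \<forall>x. L x = w \<bullet> x"
proof (intro exI allI)
  fix x
  interpret linear L by fact
  have "L x = L (\<Sum>i\<in>Basis. (x \<bullet> i) *\<^sub>R i)" by (simp add: euclidean_representation)
  also have "\<dots> = (\<Sum>i\<in>Basis. (x \<bullet> i) * L i)" by (simp add: sum scale)
  also have "\<dots> = (\<Sum>i\<in>Basis. L i *\<^sub>R i) \<bullet> x" by (simp only: inner_sum_left inner_scaleR_left) (rule sum.cong, auto simp: inner_commute)
  finally show "L x = (\<Sum>i\<in>Basis. L i *\<^sub>R i) \<bullet> x" .
qed

lemma affine_solve:
  fixes E :: "(real^'n) set" and g :: "real^'n \<Rightarrow> real"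
  assumes ind: "\<not> affine_dependent E" and e0: "e0 \<in> E"
  shows "\<exists>w s. \<forall>v\<in>E. w \<bullet> v + s = g v"
proof -
  let ?D = "(\<lambda>x. -e0 + x) ` (E - {e0})"
  have "\<not> dependent ?D" using ind affine_dependent_iff_dependent2[OF e0] by simp
  from linear_independent_extend[OF this, of "\<lambda>d. g (e0 + d) - g e0"]
  obtain L where L: "linear L" "\<forall>d\<in>?D. L d = g (e0 + d) - g e0" by blast
  obtain w where w: "\<forall>x. L x = w \<bullet> x" using linear_functional_inner[OF L(1)] by blast
  show ?thesis
  proof (intro exI ballI)
    fix v assume v: "v \<in> E"
    show "w \<bullet> v + (g e0 - w \<bullet> e0) = g v"
    proof (cases "v = e0")
      case True then show ?thesis by simp
    next
      case False
      then have "-e0 + v \<in> ?D" using v by blast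
      with L(2) have "L (-e0 + v) = g (e0 + (-e0 + v)) - g e0" by blast
      with w have "w \<bullet> (-e0 + v) = g v - g e0" by simp
      then show ?thesis by (simp add: inner_diff_right)
    qed
  qed
qed

definition Sset :: "('m::finite \<Rightarrow> real^'n) \<Rightarrow> 'm set \<Rightarrow> real \<Rightarrow> real^'n \<Rightarrow> (real^'m) set" where
  "Sset a V r P = {z. (\<forall>i. i \<notin> V \<longrightarrow> z$i = 0) \<and> (\<forall>i. i \<in> V \<longrightarrow> 0 \<le> z$i) \<and>
      (\<forall>x. r * exp (P \<bullet> x) \<le> (\<Sum>i\<in>V. z$i * exp (a i \<bullet> x)))}"

lemma Sset_closed: "closed (Sset a V r P)"
  unfolding Sset_def
  by (intro closed_Collect_conj closed_Collect_all closed_Collect_imp closed_Collect_eq closed_Collect_le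
      open_Collect_const continuous_intros continuous_on_component)

lemma Sset_convex:
  fixes a :: "'m::finite \<Rightarrow> real^'n"
  shows "convex (Sset a V r P)"
  unfolding convex_def
proof (intro ballI allI impI)
  fix z y :: "real^'m" and u v :: real
  assume z: "z \<in> Sset a V r P" and y: "y \<in> Sset a V r P" and uv: "0 \<le> u" "0 \<le> v" "u + v = 1"
  show "u *\<^sub>R z + v *\<^sub>R y \<in> Sset a V r P"
    unfolding Sset_def
  proof (intro CollectI conjI allI impI)
    fix i assume "i \<notin> V" then show "(u *\<^sub>R z + v *\<^sub>R y) $ i = 0" using z y by (simp add: Sset_def)
  next
    fix i assume "i \<in> V" then show "0 \<le> (u *\<^sub>R z + v *\<^sub>R y) $ i" using z y uv by (simp add: Sset_def)
  next
    fix x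
    have "r * exp (P \<bullet> x) = u * (r * exp (P \<bullet> x)) + v * (r * exp (P \<bullet> x))"
      using uv by (metis distrib_right mult.commute mult_1 mult.left_commute)
    also have "\<dots> \<le> u * (\<Sum>i\<in>V. z$i * exp (a i \<bullet> x)) + v * (\<Sum>i\<in>V. y$i * exp (a i \<bullet> x))"
      using z y uv by (intro add_mono mult_left_mono) (auto simp: Sset_def)
    also have "\<dots> = (\<Sum>i\<in>V. (u *\<^sub>R z + v *\<^sub>R y) $ i * exp (a i \<bullet> x))"
      by (simp add: sum_distrib_left sum.distrib algebra_simps)
    finally show "r * exp (P \<bullet> x) \<le> (\<Sum>i\<in>V. (u *\<^sub>R z + v *\<^sub>R y) $ i * exp (a i \<bullet> x))" .
  qed
qed

lemma Sset_up:
  assumes z: "z \<in> Sset a V r P" and i: "i \<in> V" and t: "t \<ge> 0" and fin: "finite V"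
  shows "z + t *\<^sub>R axis i 1 \<in> Sset a V r P"
  unfolding Sset_def
proof (intro CollectI conjI allI impI)
  fix j assume "j \<notin> V" then show "(z + t *\<^sub>R axis i 1) $ j = 0" using z i by (auto simp: Sset_def axis_def)
next
  fix j assume "j \<in> V" then show "0 \<le> (z + t *\<^sub>R axis i 1) $ j" using z t by (auto simp: Sset_def axis_def)
next
  fix x
  have "(\<Sum>j\<in>V. (z + t *\<^sub>R axis i 1) $ j * exp (a j \<bullet> x)) =
        (\<Sum>j\<in>V. z $ j * exp (a j \<bullet> x)) + (\<Sum>j\<in>V. if j = i then t * exp (a i \<bullet> x) else 0)"
    unfolding sum.distrib[symmetric] by (rule sum.cong) (auto simp: axis_def algebra_simps)
  also have "\<dots> = (\<Sum>j\<in>V. z $ j * exp (a j \<bullet> x)) + t * exp (a i \<bullet> x)"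
    using fin i by simp
  finally show "r * exp (P \<bullet> x) \<le> (\<Sum>j\<in>V. (z + t *\<^sub>R axis i 1) $ j * exp (a j \<bullet> x))"
    using z t by (auto simp: Sset_def intro: add_increasing2)
qed

lemma jensen_exp:
  fixes a :: "'m \<Rightarrow> real^'n"
  assumes fin: "finite V" and ne: "V \<noteq> {}" and l0: "\<And>i. i \<in> V \<Longrightarrow> l i \<ge> 0" and l1: "sum l V = 1"
    and P: "(\<Sum>i\<in>V. l i *\<^sub>R a i) = P"
  shows "exp (P \<bullet> x) \<le> (\<Sum>i\<in>V. l i * exp ((P - a i) \<bullet> x0 + a i \<bullet> x))"
proof -
  have "exp (\<Sum>i\<in>V. l i *\<^sub>R ((P - a i) \<bullet> x0 + a i \<bullet> x)) \<le> (\<Sum>i\<in>V. l i * exp ((P - a i) \<bullet> x0 + a i \<bullet> x))"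
    by (rule convex_on_sum[OF fin ne exp_convex l1 l0]) auto
  moreover have "(\<Sum>i\<in>V. l i *\<^sub>R ((P - a i) \<bullet> x0 + a i \<bullet> x)) = P \<bullet> x"
  proof -
    have "(\<Sum>i\<in>V. l i *\<^sub>R ((P - a i) \<bullet> x0 + a i \<bullet> x)) =
          (\<Sum>i\<in>V. l i) * (P \<bullet> x0) - (\<Sum>i\<in>V. l i *\<^sub>R a i) \<bullet> x0 + (\<Sum>i\<in>V. l i *\<^sub>R a i) \<bullet> x"
      by (simp add: inner_sum_left sum_distrib_right sum.distrib sum_subtractf algebra_simps inner_diff_left)
    then show ?thesis using l1 P by simp
  qed
  ultimately show ?thesis by simp
qed

lemma Sset_wit:
  fixes a :: "'m::finite \<Rightarrow> real^'n"
  assumes fin: "finite V" and ne: "V \<noteq> {}" and l0: "\<And>i. i \<in> V \<Longrightarrow> l i \<ge> 0" and l1: "sum l V = 1"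
    and P: "(\<Sum>i\<in>V. l i *\<^sub>R a i) = P" and r: "r \<ge> 0"
  shows "(\<chi> i. if i \<in> V then l i * r * exp ((P - a i) \<bullet> x0) else 0) \<in> Sset a V r P"
  unfolding Sset_def
proof (intro CollectI conjI allI impI)
  fix i assume "i \<in> V" then show "0 \<le> (\<chi> i. if i \<in> V then l i * r * exp ((P - a i) \<bullet> x0) else 0) $ i"
    using l0 r by simp
next
  fix x
  have "r * exp (P \<bullet> x) \<le> r * (\<Sum>i\<in>V. l i * exp ((P - a i) \<bullet> x0 + a i \<bullet> x))"
    by (rule mult_left_mono[OF jensen_exp[OF fin ne l0 l1 P] r])
  also have "\<dots> = (\<Sum>i\<in>V. (\<chi> i. if i \<in> V then l i * r * exp ((P - a i) \<bullet> x0) else 0) $ i * exp (a i \<bullet> x))"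
    unfolding sum_distrib_left
  proof (rule sum.cong[OF refl])
    fix i assume "i \<in> V"
    have "exp ((P - a i) \<bullet> x0 + a i \<bullet> x) = exp (a i \<bullet> x) * exp ((P - a i) \<bullet> x0)"
      by (simp add: exp_add[symmetric])
    then show "r * (l i * exp ((P - a i) \<bullet> x0 + a i \<bullet> x)) = (\<chi> i. if i \<in> V then l i * r * exp ((P - a i) \<bullet> x0) else 0) $ i * exp (a i \<bullet> x)"
      using \<open>i \<in> V\<close> by simp
  qed
  finally show "r * exp (P \<bullet> x) \<le> (\<Sum>i\<in>V. (\<chi> i. if i \<in> V then l i * r * exp ((P - a i) \<bullet> x0) else 0) $ i * exp (a i \<bullet> x))" .
qed simp

lemma sum_closed:
  fixes S1 S2 :: "(real^'m) set"
  assumes c1: "closed S1" and c2: "closed S2" and nn1: "\<forall>z\<in>S1. \<forall>i. 0 \<le> z$i" and nn2: "\<forall>z\<in>S2. \<forall>i. 0 \<le> z$i"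
  shows "closed (\<Union>u\<in>S1. \<Union>v\<in>S2. {u + v})"
  unfolding closed_sequential_limits
proof (intro allI impI, elim conjE)
  fix s l assume sT: "\<forall>n. s n \<in> (\<Union>u\<in>S1. \<Union>v\<in>S2. {u + v})" and lim: "s \<longlonglongrightarrow> l"
  from sT have "\<forall>n. \<exists>uv. fst uv \<in> S1 \<and> snd uv \<in> S2 \<and> s n = fst uv + snd uv" by force
  from choice[OF this] obtain uv where "\<forall>n. fst (uv n) \<in> S1 \<and> snd (uv n) \<in> S2 \<and> s n = fst (uv n) + snd (uv n)"
    by blast
  then have uv: "\<And>n. fst (uv n) \<in> S1" "\<And>n. snd (uv n) \<in> S2" "\<And>n. s n = fst (uv n) + snd (uv n)"
    by auto
  define u where "u n = fst (uv n)" for n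
  define v where "v n = snd (uv n)" for n
  have u1: "u n \<in> S1" and v2: "v n \<in> S2" and suv: "s n = u n + v n" for n using uv by (auto simp: u_def v_def)
  from convergent_imp_Bseq[OF convergentI[OF lim]] obtain B where B: "\<And>n. norm (s n) \<le> B" unfolding Bseq_def by auto
  have ub: "u n \<in> cbox 0 (\<chi> i. B)" for n
    unfolding mem_box_cart
  proof
    fix i
    have "u n $ i \<le> s n $ i" using suv[of n] nn2 v2[of n] by simp
    also have "\<dots> \<le> B" using component_le_norm_cart[of "s n" i] B[of n] by simp
    finally show "0 $ i \<le> u n $ i \<and> u n $ i \<le> (\<chi> i. B) $ i" using nn1 u1[of n] by simp
  qed
  obtain ul r where ul0: "ul \<in> cbox 0 (\<chi> i. B)" and ul: "strict_mono (r :: nat \<Rightarrow> nat)" "(u \<circ> r) \<longlonglongrightarrow> ul"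
    by (rule seq_compactE[OF compact_imp_seq_compact[OF compact_cbox] allI[OF ub]])
  have ulS: "ul \<in> S1" using c1 ul(2) u1 unfolding closed_sequential_limits
    by (metis comp_apply)
  have "(s \<circ> r) \<longlonglongrightarrow> l" using LIMSEQ_subseq_LIMSEQ[OF lim ul(1)] .
  from tendsto_diff[OF this ul(2)] have "(\<lambda>n. v (r n)) \<longlonglongrightarrow> l - ul"
    by (simp add: o_def suv)
  moreover have "\<forall>n. (\<lambda>n. v (r n)) n \<in> S2" using v2 by simp
  ultimately have "l - ul \<in> S2"
    using closed_sequential_limits[THEN iffD1, OF c2, rule_format, of "\<lambda>n. v (r n)" "l - ul"] by blast
  with ulS show "l \<in> (\<Union>u\<in>S1. \<Union>v\<in>S2. {u + v})" by force
qed

lemma hull_rep: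
  fixes a :: "'m \<Rightarrow> 'a::real_vector"
  assumes fin: "finite V" and inj: "inj_on a V" and h: "P \<in> convex hull (a ` V)"
  obtains l where "\<And>i. i \<in> V \<Longrightarrow> 0 \<le> l i" "sum l V = 1" "(\<Sum>i\<in>V. l i *\<^sub>R a i) = P"
proof -
  from h obtain u where u: "\<forall>x\<in>a ` V. 0 \<le> u x" "sum u (a ` V) = 1" "(\<Sum>x\<in>a ` V. u x *\<^sub>R x) = P"
    using convex_hull_finite[of "a ` V"] fin by auto
  show ?thesis
  proof
    show "\<And>i. i \<in> V \<Longrightarrow> 0 \<le> (u \<circ> a) i" using u(1) by simp
    show "sum (u \<circ> a) V = 1" using u(2) sum.reindex[OF inj, of u] by simp
    show "(\<Sum>i\<in>V. (u \<circ> a) i *\<^sub>R a i) = P" using u(3) sum.reindex[OF inj, of "\<lambda>x. u x *\<^sub>R x"] by simp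
  qed
qed

lemma Sig_support:
  fixes a :: "'m::finite \<Rightarrow> real^'n"
  assumes "\<And>i. i \<notin> W \<Longrightarrow> c i = 0"
  shows "Sig a c x = (\<Sum>i\<in>W. c i * exp (a i \<bullet> x))"
  unfolding Sig_def by (rule sum.mono_neutral_right) (use assms in auto)

lemma inner_support:
  fixes y z :: "real^'m::finite"
  assumes "\<And>i. i \<notin> V \<Longrightarrow> z $ i = 0"
  shows "y \<bullet> z = (\<Sum>i\<in>V. y $ i * z $ i)"
  unfolding inner_vec_def inner_real_def by (rule sum.mono_neutral_right) (use assms in auto)

lemma two_neg:
  fixes a :: "'m::finite \<Rightarrow> real^'n" and V :: "'m set"
  assumes pV: "p \<notin> V" and qV: "q \<notin> V" and pq: "p \<noteq> q"
    and inj: "inj_on a V" and ind: "\<not> affine_dependent (a ` V)"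
    and hp: "a p \<in> convex hull (a ` V)" and hq: "a q \<in> convex hull (a ` V)"
    and c: "c \<in> C_NNS a" and zero: "\<And>i. i \<notin> V \<Longrightarrow> i \<noteq> p \<Longrightarrow> i \<noteq> q \<Longrightarrow> c i = 0"
    and cV: "\<And>i. i \<in> V \<Longrightarrow> c i \<ge> 0" and cp: "c p \<le> 0" and cq: "c q \<le> 0"
  shows "c \<in> C_SAGE a"
proof -
  have fin: "finite V" by simp
  obtain l where l0: "\<And>i. i \<in> V \<Longrightarrow> 0 \<le> l i" and l1: "sum l V = 1" and lP: "(\<Sum>i\<in>V. l i *\<^sub>R a i) = a p"
    using hull_rep[OF fin inj hp] by blast
  obtain m where m0: "\<And>i. i \<in> V \<Longrightarrow> 0 \<le> m i" and m1: "sum m V = 1" and mP: "(\<Sum>i\<in>V. m i *\<^sub>R a i) = a q"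
    using hull_rep[OF fin inj hq] by blast
  have ne: "V \<noteq> {}" using l1 by auto
  define \<alpha> where "\<alpha> = - c p"
  define \<beta> where "\<beta> = - c q"
  have \<alpha>0: "\<alpha> \<ge> 0" and \<beta>0: "\<beta> \<ge> 0" using cp cq by (auto simp: \<alpha>_def \<beta>_def)
  define S1 where "S1 = Sset a V \<alpha> (a p)"
  define S2 where "S2 = Sset a V \<beta> (a q)"
  define T where "T = (\<Union>u\<in>S1. \<Union>v\<in>S2. {u + v})"
  define cv :: "real^'m" where "cv = (\<chi> i. if i \<in> V then c i else 0)"
  define w1 where "w1 x0 = (\<chi> i. if i \<in> V then l i * \<alpha> * exp ((a p - a i) \<bullet> x0) else 0)" for x0
  define w2 where "w2 x0 = (\<chi> i. if i \<in> V then m i * \<beta> * exp ((a q - a i) \<bullet> x0) else 0)" for x0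
  have w1S: "w1 x0 \<in> S1" for x0 unfolding w1_def S1_def by (rule Sset_wit[OF fin ne l0 l1 lP \<alpha>0])
  have w2S: "w2 x0 \<in> S2" for x0 unfolding w2_def S2_def by (rule Sset_wit[OF fin ne m0 m1 mP \<beta>0])
  have nnS: "\<forall>z\<in>Sset a V r P. \<forall>i. 0 \<le> z$i" for r P by (auto simp: Sset_def)
  have SigV: "Sig a c x = c p * exp (a p \<bullet> x) + c q * exp (a q \<bullet> x) + (\<Sum>i\<in>V. c i * exp (a i \<bullet> x))" for x
  proof -
    have "Sig a c x = (\<Sum>i\<in>insert p (insert q V). c i * exp (a i \<bullet> x))"
      by (rule Sig_support) (use zero in auto)
    then show ?thesis using pV qV pq fin by (simp add: add.assoc)
  qed
  have "cv \<in> T"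
  proof (rule ccontr)
    assume notin: "cv \<notin> T"
    have "convex T" unfolding T_def S1_def S2_def by (intro convex_sums Sset_convex)
    moreover have "closed T" unfolding T_def S1_def S2_def
      by (intro sum_closed Sset_closed nnS)
    ultimately obtain y b where yb: "y \<bullet> cv < b" and ybT: "\<And>z. z \<in> T \<Longrightarrow> b < y \<bullet> z"
      using separating_hyperplane_closed_point[OF _ _ notin] by blast
    have y0: "0 \<le> y $ i" if i: "i \<in> V" for i
    proof (rule ccontr)
      assume neg: "\<not> 0 \<le> y $ i"
      define z0 where "z0 = w1 0 + w2 0"
      define t where "t = (\<bar>y \<bullet> z0\<bar> + \<bar>b\<bar> + 1) / (- (y $ i))"
      have t0: "t \<ge> 0" using neg unfolding t_def by (intro divide_nonneg_pos) auto
      have ty: "t * y $ i = - (\<bar>y \<bullet> z0\<bar> + \<bar>b\<bar> + 1)" using neg by (simp add: t_def)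
      have "(w1 0 + t *\<^sub>R axis i 1) + w2 0 \<in> T"
        unfolding T_def using Sset_up[OF w1S[of 0, unfolded S1_def] i t0 fin] w2S[of 0]
        by (auto simp: S1_def)
      then have "b < y \<bullet> ((w1 0 + t *\<^sub>R axis i 1) + w2 0)" by (rule ybT)
      also have "\<dots> = y \<bullet> z0 + t * y $ i"
        by (simp add: z0_def inner_add_right inner_axis algebra_simps)
      finally show False using ty by linarith
    qed
    define M where "M = (\<Sum>i\<in>V. c i)"
    have M0: "M \<ge> 0" unfolding M_def using cV by (simp add: sum_nonneg)
    define \<epsilon> where "\<epsilon> = (b - y \<bullet> cv) / (M + 1)"
    have \<epsilon>0: "\<epsilon> > 0" using yb M0 by (simp add: \<epsilon>_def)
    have \<epsilon>M: "\<epsilon> * M < b - y \<bullet> cv"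
    proof -
      have "\<epsilon> * M < \<epsilon> * (M + 1)" using \<epsilon>0 by simp
      also have "\<dots> = b - y \<bullet> cv" using M0 by (simp add: \<epsilon>_def)
      finally show ?thesis .
    qed
    obtain i0 where i0: "i0 \<in> V" using ne by blast
    obtain w s where ws0: "\<forall>v\<in>a ` V. w \<bullet> v + s = ln (y $ (inv_into V a v) + \<epsilon>)"
      using affine_solve[OF ind imageI[OF i0], of "\<lambda>v. ln (y $ (inv_into V a v) + \<epsilon>)"] by blast
    have ws: "y $ i + \<epsilon> = exp s * exp (a i \<bullet> w)" if "i \<in> V" for i
    proof -
      have "w \<bullet> a i + s = ln (y $ i + \<epsilon>)" using ws0 that inv_into_f_f[OF inj that] by auto
      then have "exp (w \<bullet> a i + s) = y $ i + \<epsilon>" using y0[OF that] \<epsilon>0 by simp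
      then show ?thesis by (simp add: exp_add inner_commute mult.commute)
    qed
    have zsupp: "\<And>i. i \<notin> V \<Longrightarrow> (w1 w + w2 w) $ i = 0" by (simp add: w1_def w2_def)
    have cvsupp: "\<And>i. i \<notin> V \<Longrightarrow> cv $ i = 0" by (simp add: cv_def)
    have "w1 w + w2 w \<in> T" unfolding T_def using w1S w2S by blast
    then have "b < y \<bullet> (w1 w + w2 w)" by (rule ybT)
    also have "\<dots> = (\<Sum>i\<in>V. y $ i * (w1 w + w2 w) $ i)" by (rule inner_support[OF zsupp])
    also have "\<dots> \<le> (\<Sum>i\<in>V. (y $ i + \<epsilon>) * (w1 w + w2 w) $ i)"
    proof (rule sum_mono)
      fix i assume "i \<in> V"
      have "0 \<le> w1 w $ i" "0 \<le> w2 w $ i" using w1S[of w] w2S[of w] nnS unfolding S1_def S2_def by blast+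
      then have "0 \<le> (w1 w + w2 w) $ i" by simp
      then show "y $ i * (w1 w + w2 w) $ i \<le> (y $ i + \<epsilon>) * (w1 w + w2 w) $ i"
        using \<epsilon>0 by (simp add: distrib_right)
    qed
    also have "\<dots> = exp s * (\<alpha> * exp (a p \<bullet> w) * (\<Sum>i\<in>V. l i) + \<beta> * exp (a q \<bullet> w) * (\<Sum>i\<in>V. m i))"
      unfolding sum_distrib_left sum.distrib[symmetric] distrib_left
    proof (rule sum.cong[OF refl])
      fix i assume i: "i \<in> V"
      have e1: "exp (a i \<bullet> w) * exp ((a p - a i) \<bullet> w) = exp (a p \<bullet> w)"
        by (simp add: exp_add[symmetric] inner_diff_left)
      have e2: "exp (a i \<bullet> w) * exp ((a q - a i) \<bullet> w) = exp (a q \<bullet> w)"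
        by (simp add: exp_add[symmetric] inner_diff_left)
      show "(y $ i + \<epsilon>) * (w1 w + w2 w) $ i =
            exp s * (\<alpha> * exp (a p \<bullet> w) * l i) + exp s * (\<beta> * exp (a q \<bullet> w) * m i)"
        unfolding ws[OF i] using i e1 e2
        by (simp add: w1_def w2_def algebra_simps)
    qed
    also have "\<dots> = exp s * (\<alpha> * exp (a p \<bullet> w) + \<beta> * exp (a q \<bullet> w))" using l1 m1 by simp
    finally have A: "b < exp s * (\<alpha> * exp (a p \<bullet> w) + \<beta> * exp (a q \<bullet> w))" .
    have "exp s * (\<Sum>i\<in>V. c i * exp (a i \<bullet> w)) = (\<Sum>i\<in>V. (y $ i + \<epsilon>) * cv $ i)"
      unfolding sum_distrib_left by (rule sum.cong[OF refl]) (simp add: ws cv_def)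
    also have "\<dots> = y \<bullet> cv + \<epsilon> * M"
    proof -
      have "y \<bullet> cv = (\<Sum>i\<in>V. y $ i * cv $ i)" by (rule inner_support[OF cvsupp])
      also have "\<dots> = (\<Sum>i\<in>V. y $ i * c i)" by (rule sum.cong) (auto simp: cv_def)
      finally have "y \<bullet> cv = (\<Sum>i\<in>V. y $ i * c i)" .
      moreover have "(\<Sum>i\<in>V. (y $ i + \<epsilon>) * cv $ i) = (\<Sum>i\<in>V. y $ i * c i) + \<epsilon> * M"
        unfolding M_def sum_distrib_left sum.distrib[symmetric] by (rule sum.cong) (auto simp: cv_def algebra_simps)
      ultimately show ?thesis by simp
    qed
    also have "\<dots> < b" using \<epsilon>M by simp
    finally have "exp s * (\<Sum>i\<in>V. c i * exp (a i \<bullet> w)) < exp s * (\<alpha> * exp (a p \<bullet> w) + \<beta> * exp (a q \<bullet> w))"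
      using A by linarith
    then have "(\<Sum>i\<in>V. c i * exp (a i \<bullet> w)) < \<alpha> * exp (a p \<bullet> w) + \<beta> * exp (a q \<bullet> w)" by simp
    moreover have "Sig a c w \<ge> 0" using c by (simp add: C_NNS_def)
    ultimately show False using SigV[of w] by (simp add: \<alpha>_def \<beta>_def)
  qed
  then obtain u v where u: "u \<in> S1" and v: "v \<in> S2" and cvuv: "cv = u + v" unfolding T_def by blast
  define c1 where "c1 = (\<lambda>i. if i = p then c p else if i \<in> V then u $ i else 0)"
  define c2 where "c2 = (\<lambda>i. if i = q then c q else if i \<in> V then v $ i else 0)"
  have c1A: "c1 \<in> C_AGE a p"
    unfolding C_AGE_def C_NNS_def
  proof (intro CollectI conjI allI impI)
    fix i assume "i \<noteq> p" then show "0 \<le> c1 i" using u by (auto simp: c1_def S1_def Sset_def)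
  next
    fix x
    have "Sig a c1 x = (\<Sum>i\<in>insert p V. c1 i * exp (a i \<bullet> x))"
      by (rule Sig_support) (auto simp: c1_def)
    also have "\<dots> = c p * exp (a p \<bullet> x) + (\<Sum>i\<in>V. u $ i * exp (a i \<bullet> x))"
      using pV fin by (simp add: c1_def cong: sum.cong) (rule sum.cong, auto)
    moreover have "- (c p * exp (a p \<bullet> x)) \<le> (\<Sum>i\<in>V. u $ i * exp (a i \<bullet> x))"
    proof -
      have "\<forall>x. \<alpha> * exp (a p \<bullet> x) \<le> (\<Sum>i\<in>V. u $ i * exp (a i \<bullet> x))"
        using u by (simp add: S1_def Sset_def)
      then show ?thesis by (simp add: \<alpha>_def)
    qed
    ultimately show "0 \<le> Sig a c1 x" by linarith
  qed
  have c2A: "c2 \<in> C_AGE a q"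
    unfolding C_AGE_def C_NNS_def
  proof (intro CollectI conjI allI impI)
    fix i assume "i \<noteq> q" then show "0 \<le> c2 i" using v by (auto simp: c2_def S2_def Sset_def)
  next
    fix x
    have "Sig a c2 x = (\<Sum>i\<in>insert q V. c2 i * exp (a i \<bullet> x))"
      by (rule Sig_support) (auto simp: c2_def)
    also have "\<dots> = c q * exp (a q \<bullet> x) + (\<Sum>i\<in>V. v $ i * exp (a i \<bullet> x))"
      using qV fin by (simp add: c2_def cong: sum.cong) (rule sum.cong, auto)
    moreover have "- (c q * exp (a q \<bullet> x)) \<le> (\<Sum>i\<in>V. v $ i * exp (a i \<bullet> x))"
    proof -
      have "\<forall>x. \<beta> * exp (a q \<bullet> x) \<le> (\<Sum>i\<in>V. v $ i * exp (a i \<bullet> x))"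
        using v by (simp add: S2_def Sset_def)
      then show ?thesis by (simp add: \<beta>_def)
    qed
    ultimately show "0 \<le> Sig a c2 x" by linarith
  qed
  have "c = (\<lambda>i. c1 i + c2 i)"
  proof
    fix i
    show "c i = c1 i + c2 i"
    proof (cases "i \<in> V")
      case True
      then have "cv $ i = u $ i + v $ i" using cvuv by simp
      then show ?thesis using True pV qV by (auto simp: c1_def c2_def cv_def)
    next
      case False
      have "u $ i = 0" "v $ i = 0" using u v False by (auto simp: S1_def S2_def Sset_def)
      then show ?thesis using False pq zero[of i] by (auto simp: c1_def c2_def)
    qed
  qed
  then show ?thesis using SAGE_add[OF AGE_SAGE[OF c1A] AGE_SAGE[OF c2A]] by simp
qed

lemma block:
  fixes a :: "'m::finite \<Rightarrow> real^'n"
  assumes inj: "inj a"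
    and face: "New a B face_of New a UNIV"
    and cond1: "\<not> affine_dependent {v. v extreme_point_of New a B} \<Longrightarrow> card (nonextreme_cols a B) \<le> 2"
    and cond2: "affine_dependent {v. v extreme_point_of New a B} \<Longrightarrow> card (nonextreme_cols a B) \<le> 1"
    and c: "c \<in> C_NNS a" and zero: "\<And>i. i \<notin> B \<Longrightarrow> c i = 0"
  shows "c \<in> C_SAGE a"
proof -
  define N where "N = {j. c j < 0}"
  have Nsub: "N \<subseteq> nonextreme_cols a B"
  proof
    fix j assume j: "j \<in> N"
    then have jB: "j \<in> B" using zero by (force simp: N_def)
    have "\<not> a j extreme_point_of New a B"
    proof
      assume "a j extreme_point_of New a B"
      then have "{a j} face_of New a B" using face_of_singleton by blast
      from face_of_trans[OF this face] have "a j extreme_point_of New a UNIV" using face_of_singleton by blast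
      from extreme_nonneg[OF inj c this] j show False by (simp add: N_def)
    qed
    then show "j \<in> nonextreme_cols a B" using jB by (simp add: nonextreme_cols_def)
  qed
  have finN: "finite N" "finite (nonextreme_cols a B)" by simp_all
  have c2: "card (nonextreme_cols a B) \<le> 2"
  proof (cases "affine_dependent {v. v extreme_point_of New a B}")
    case True then show ?thesis using cond2 by fastforce
  next
    case False then show ?thesis by (rule cond1)
  qed
  show ?thesis
  proof (cases "card N \<le> 1")
    case True
    have "\<exists>k. \<forall>i. i \<noteq> k \<longrightarrow> c i \<ge> 0"
    proof (cases "N = {}")
      case True
      then have "\<forall>i. c i \<ge> 0" unfolding N_def by (simp add: not_less)
      then show ?thesis by blast
    next
      case False
      then obtain k where kN: "k \<in> N" by blast
      have "\<forall>j\<in>N. j = k" using \<open>card N \<le> 1\<close> kN card_le_Suc0_iff_eq[OF finN(1)] by simp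
      then have "\<forall>i. i \<noteq> k \<longrightarrow> c i \<ge> 0" unfolding N_def by (metis mem_Collect_eq not_less)
      then show ?thesis by blast
    qed
    then obtain k where k: "\<forall>i. i \<noteq> k \<longrightarrow> c i \<ge> 0" by blast
    then have "c \<in> C_AGE a k" using c by (simp add: C_AGE_def)
    then show ?thesis by (rule AGE_SAGE)
  next
    case False
    have cN: "card N = 2" using False card_mono[OF finN(2) Nsub] c2 by simp
    then have cX: "card (nonextreme_cols a B) \<ge> 2" using card_mono[OF finN(2) Nsub] by simp
    have ind: "\<not> affine_dependent {v. v extreme_point_of New a B}"
    proof
      assume "affine_dependent {v. v extreme_point_of New a B}"
      from cond2[OF this] cX show False by simp
    qed
    have "card N = card (nonextreme_cols a B)" using cN c2 cX by linarith
    from card_subset_eq[OF finN(2) Nsub this] have Neq: "N = nonextreme_cols a B" .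
    obtain p q where pq: "N = {p, q}" "p \<noteq> q" using cN[unfolded card_2_iff] by blast
    define V where "V = B - {p, q}"
    have pB: "p \<in> B" and qB: "q \<in> B" using Neq pq by (auto simp: nonextreme_cols_def)
    have pX: "\<not> a p extreme_point_of New a B" and qX: "\<not> a q extreme_point_of New a B"
      using Neq pq by (auto simp: nonextreme_cols_def)
    have E: "{v. v extreme_point_of New a B} = a ` V"
    proof
      show "{v. v extreme_point_of New a B} \<subseteq> a ` V"
      proof
        fix v assume "v \<in> {v. v extreme_point_of New a B}"
        then have v: "v extreme_point_of New a B" by simp
        then have "v \<in> a ` B" unfolding New_def by (rule extreme_point_of_convex_hull)
        then obtain j where j: "j \<in> B" "v = a j" by blast
        then have "j \<noteq> p" "j \<noteq> q" using v pX qX by auto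
        then show "v \<in> a ` V" using j by (auto simp: V_def)
      qed
    next
      show "a ` V \<subseteq> {v. v extreme_point_of New a B}"
      proof
        fix v assume "v \<in> a ` V"
        then obtain j where j: "j \<in> V" "v = a j" by blast
        then have "j \<notin> nonextreme_cols a B" using Neq pq by (auto simp: V_def)
        then show "v \<in> {v. v extreme_point_of New a B}" using j by (auto simp: V_def nonextreme_cols_def)
      qed
    qed
    have KM: "New a B = convex hull (a ` V)"
    proof -
      have "compact (New a B)" unfolding New_def by (rule compact_convex_hull[OF finite_imp_compact]) simp
      moreover have "convex (New a B)" unfolding New_def by (rule convex_convex_hull)
      ultimately have "New a B = convex hull {v. v extreme_point_of New a B}" by (rule Krein_Milman_Minkowski)
      then show ?thesis unfolding E .
    qed
    have "a p \<in> New a B" unfolding New_def by (rule hull_inc) (simp add: pB)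
    then have hp: "a p \<in> convex hull (a ` V)" using KM by simp
    have "a q \<in> New a B" unfolding New_def by (rule hull_inc) (simp add: qB)
    then have hq: "a q \<in> convex hull (a ` V)" using KM by simp
    show ?thesis
    proof (rule two_neg[of p V q a])
      show "p \<notin> V" "q \<notin> V" "p \<noteq> q" using pq by (auto simp: V_def)
      show "inj_on a V" by (rule inj_on_subset[OF inj]) simp
      show "\<not> affine_dependent (a ` V)" using ind unfolding E .
      show "a p \<in> convex hull (a ` V)" "a q \<in> convex hull (a ` V)" by fact+
      show "c \<in> C_NNS a" by fact
      show "\<And>i. i \<notin> V \<Longrightarrow> i \<noteq> p \<Longrightarrow> i \<noteq> q \<Longrightarrow> c i = 0" using zero by (auto simp: V_def)
      show "c i \<ge> 0" if "i \<in> V" for i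
      proof -
        have "i \<notin> N" using that pq(1) by (simp add: V_def)
        then show ?thesis by (simp add: N_def)
      qed
      have "p \<in> N" "q \<in> N" using pq(1) by simp_all
      then show "c p \<le> 0" "c q \<le> 0" by (simp_all add: N_def)
    qed
  qed
qed


theorem mainTheorem10:
  fixes a :: "'m::finite \<Rightarrow> real^'n" and P :: "'m set set"
  assumes distinct_cols: "inj a"
    and part: "partition_on UNIV P"
    and faces: "\<And>B. B \<in> P \<Longrightarrow> New a B face_of New a UNIV"
    and disj: "\<And>B B'. B \<in> P \<Longrightarrow> B' \<in> P \<Longrightarrow> B \<noteq> B' \<Longrightarrow> New a B \<inter> New a B' = {}"
    and cond1: "\<And>B. B \<in> P \<Longrightarrow> \<not> affine_dependent {v. v extreme_point_of New a B}
                  \<Longrightarrow> card (nonextreme_cols a B) \<le> 2"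
    and cond2: "\<And>B. B \<in> P \<Longrightarrow> affine_dependent {v. v extreme_point_of New a B}
                  \<Longrightarrow> card (nonextreme_cols a B) \<le> 1"
  shows "C_SAGE a = C_NNS a"
proof
  show "C_SAGE a \<subseteq> C_NNS a" by (rule SAGE_sub_NNS)
next
  show "C_NNS a \<subseteq> C_SAGE a"
  proof
    fix c assume c: "c \<in> C_NNS a"
    have cover: "\<exists>B\<in>P. i \<in> B" for i using part by (auto simp: partition_on_def)
    have uniq: "B = B'" if "B \<in> P" "B' \<in> P" "i \<in> B" "i \<in> B'" for B B' i
      using part that by (auto simp: partition_on_def disjoint_def)
    have inNew: "a i \<in> New a B \<longleftrightarrow> i \<in> B" if B: "B \<in> P" for i B
    proof
      assume ai: "a i \<in> New a B"
      obtain B' where B': "B' \<in> P" "i \<in> B'" using cover by blast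
      have "a i \<in> New a B'" using B'(2) unfolding New_def by (simp add: hull_inc)
      then show "i \<in> B" using disj[OF B B'(1)] ai B'(2) by blast
    next
      assume "i \<in> B" then show "a i \<in> New a B" unfolding New_def by (simp add: hull_inc)
    qed
    have blk: "(\<lambda>i. if i \<in> B then c i else 0) \<in> C_SAGE a" if B: "B \<in> P" for B
    proof (rule block[OF distinct_cols faces[OF B] cond1[OF B] cond2[OF B]])
      have "(\<lambda>i. if a i \<in> New a B then c i else 0) \<in> C_NNS a" by (rule face_restrict[OF c faces[OF B]])
      moreover have "(\<lambda>i. if a i \<in> New a B then c i else 0) = (\<lambda>i. if i \<in> B then c i else 0)"
        using inNew[OF B] by auto
      ultimately show "(\<lambda>i. if i \<in> B then c i else 0) \<in> C_NNS a" by simp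
    next
      fix i assume "i \<notin> B"
      then show "(if i \<in> B then c i else 0) = 0" by simp
    qed
    have finP: "finite P" by simp
    have "(\<lambda>i. \<Sum>B\<in>P. if i \<in> B then c i else 0) \<in> C_SAGE a" by (rule SAGE_sum[OF finP blk])
    moreover have "(\<lambda>i. \<Sum>B\<in>P. if i \<in> B then c i else 0) = c"
    proof
      fix i
      obtain B0 where B0: "B0 \<in> P" "i \<in> B0" using cover by blast
      have "(\<Sum>B\<in>P. if i \<in> B then c i else 0) = (\<Sum>B\<in>P. if B = B0 then c i else 0)"
        by (rule sum.cong[OF refl]) (use B0 uniq in auto)
      also have "\<dots> = c i" using B0 finP by simp
      finally show "(\<Sum>B\<in>P. if i \<in> B then c i else 0) = c i" .
    qed
    ultimately show "c \<in> C_SAGE a" by simp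
  qed
qed


end
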